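(* Let $n\in\mathbb N$. Then there exists $k_0\in\mathbb N$ such that for all $k,j\in\mathbb N$ with $j\ge k\ge k_0$, $$p^{(j)}_n\le p^{(k)}_n\,\log^{(j-k+1)\log(j-k+1)}p^{(k)}_n.$$
   Context: Let $p_n$ denote the $n$-th prime number. Define $p^{(0)}_n=n$ and recursively $p^{(k+1)}_n=p_{p^{(k)}_n}$ for $k\in\mathbb N_0$. $\log$ is the natural logarithm and $\log^{t}y=(\log y)^t$. *)

theory Defs
  imports "HOL-Analysis.Analysis" "HOL-Library.Infinite_Set" "HOL-Computational_Algebra.Primes"
begin

text \<open>The n-th prime, 1-indexed: nth_prime 1 = 2, nth_prime 2 = 3, ...
  (The value at 0 is irrelevant; by convention it is 2.)\<close>
definition nth_prime :: "nat \<Rightarrow> nat" where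
  "nth_prime n = enumerate {p::nat. prime p} (n - 1)"

fun iter_prime :: "nat \<Rightarrow> nat \<Rightarrow> nat" where
  "iter_prime 0 n = n"
| "iter_prime (Suc k) n = nth_prime (iter_prime k n)"

end

theory Submission
  imports Defs "HOL-Real_Asymp.Real_Asymp"
begin


lemma Suc_div_dvd: "(q::nat) > 0 \<Longrightarrow> Suc m div q = m div q + (if q dvd Suc m then 1 else 0)"
  by (auto simp: div_Suc dvd_eq_mod_eq_0)

lemma legendre:
  fixes p :: nat
  assumes p: "prime p"
  shows "m \<le> N \<Longrightarrow> multiplicity p (fact m :: nat) = (\<Sum>i\<in>{1..N}. m div p ^ i)"
proof (induction m)
  case 0
  then show ?case by simp
next
  case (Suc m)
  have p1: "p > 1" using p prime_gt_1_nat by blast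
  have "multiplicity p (fact (Suc m) :: nat) = multiplicity p (Suc m) + multiplicity p (fact m :: nat)"
  proof -
    have "(fact (Suc m) :: nat) = Suc m * fact m" by (simp only: fact_Suc of_nat_id)
    thus ?thesis using p by (simp only: prime_elem_multiplicity_mult_distrib prime_imp_prime_elem
       fact_nonzero Suc_neq_Zero not_False_eq_True)
  qed
  also have "multiplicity p (fact m :: nat) = (\<Sum>i\<in>{1..N}. m div p ^ i)" using Suc by simp
  also have "multiplicity p (Suc m) = card {i\<in>{1..N}. p ^ i dvd Suc m}"
  proof -
    have le: "p ^ multiplicity p (Suc m) dvd Suc m" by (rule multiplicity_dvd)
    hence "p ^ multiplicity p (Suc m) \<le> Suc m" by (rule dvd_imp_le) simp
    moreover have "multiplicity p (Suc m) < p ^ multiplicity p (Suc m)"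
      using p1 less_exp[of "multiplicity p (Suc m)"] power_mono[of 2 p "multiplicity p (Suc m)"] by linarith
    ultimately have "multiplicity p (Suc m) \<le> N" using Suc.prems by linarith
    hence "{i\<in>{1..N}. p ^ i dvd Suc m} = {1..multiplicity p (Suc m)}"
    proof -
      have iff: "\<And>i. p^i dvd Suc m \<longleftrightarrow> i \<le> multiplicity p (Suc m)"
        by (rule power_dvd_iff_le_multiplicity) (use p not_prime_unit in auto)
      show ?thesis
      proof (rule set_eqI)
        fix i
        show "i \<in> {i\<in>{1..N}. p ^ i dvd Suc m} \<longleftrightarrow> i \<in> {1..multiplicity p (Suc m)}"
          using iff[of i] \<open>multiplicity p (Suc m) \<le> N\<close> by (simp only: mem_Collect_eq atLeastAtMost_iff) linarith
      qed
    qed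
    thus ?thesis by simp
  qed
  also have "card {i\<in>{1..N}. p ^ i dvd Suc m} = (\<Sum>i\<in>{1..N}. (if p ^ i dvd Suc m then 1 else 0))"
    by (simp add: sum.If_cases Int_def conj_commute)
  finally show ?case using p1
    by (simp add: Suc_div_dvd sum.distrib del: of_nat_Suc)
qed



lemma div2_ge: "(q::nat) > 0 \<Longrightarrow> 2*(n div q) \<le> (2*n) div q"
  by (simp add: less_eq_div_iff_mult_less_eq)

lemma div2_le: "(q::nat) > 0 \<Longrightarrow> (2*n) div q \<le> 2*(n div q) + 1"
proof -
  assume q: "q > 0"
  have e: "2*n = 2*(n mod q) + q*(2*(n div q))"
  proof -
    have "n = n mod q + q * (n div q)" using div_mult_mod_eq[of n q] by simp
    hence "2*n = 2*(n mod q + q * (n div q))" by simp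
    also have "\<dots> = 2*(n mod q) + q*(2*(n div q))" by (simp only: distrib_left mult.left_commute)
    finally show ?thesis .
  qed
  have "(2*n) div q = (2*(n mod q)) div q + 2*(n div q)"
    by (subst e) (simp add: q)
  moreover have "(2*(n mod q)) div q < 2"
    using q by (intro less_mult_imp_div_less) simp
  ultimately show ?thesis by simp
qed

lemma binom_mult_bound:
  fixes p n :: nat
  assumes p: "prime p" and n: "n \<ge> 1"
  shows "p ^ multiplicity p ((2*n) choose n) \<le> 2*n"
proof -
  have p1: "p > 1" using p prime_gt_1_nat by blast
  define v where "v = multiplicity p ((2*n) choose n)"
  have "fact n * fact n * ((2*n) choose n) = (fact (2*n) :: nat)"
    using binomial_fact_lemma[of n "2*n"] by simp
  hence "multiplicity p (fact (2*n) :: nat) = multiplicity p (fact n :: nat) + multiplicity p (fact n :: nat) + v"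
    unfolding v_def using p
    by (metis fact_nonzero mult_eq_0_iff prime_elem_multiplicity_mult_distrib prime_imp_prime_elem)
  hence eq: "(\<Sum>i\<in>{1..2*n}. (2*n) div p^i) = (\<Sum>i\<in>{1..2*n}. 2 * (n div p^i)) + v"
    using legendre[OF p, of "2*n" "2*n"] legendre[OF p, of n "2*n"] by (simp add: sum.distrib[symmetric] mult_2)
  have "v = (\<Sum>i\<in>{1..2*n}. (2*n) div p^i - 2 * (n div p^i))"
    using eq p1 div2_ge by (simp add: sum_subtractf_nat)
  also have "\<dots> \<le> (\<Sum>i\<in>{1..2*n}. if p^i \<le> 2*n then 1 else 0)"
  proof (rule sum_mono)
    fix i assume "i \<in> {1..2*n}"
    have q: "p^i > 0" using p1 by simp
    show "(2*n) div p^i - 2 * (n div p^i) \<le> (if p^i \<le> 2*n then 1 else 0)"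
      using div2_le[OF q, of n] by (auto simp: div_less)
  qed
  also have "\<dots> = card {i\<in>{1..2*n}. p^i \<le> 2*n}"
    by (simp add: sum.If_cases Int_def conj_commute)
  finally have vle: "v \<le> card {i\<in>{1..2*n}. p^i \<le> 2*n}" .
  show ?thesis
  proof (rule ccontr)
    assume "\<not> p ^ multiplicity p (2 * n choose n) \<le> 2 * n"
    hence big: "p ^ v > 2*n" unfolding v_def by simp
    have "{i\<in>{1..2*n}. p^i \<le> 2*n} \<subseteq> {1..<v}"
    proof
      fix i assume "i \<in> {i\<in>{1..2*n}. p^i \<le> 2*n}"
      hence "p^i < p^v" "i \<ge> 1" using big by auto
      thus "i \<in> {1..<v}" using p1 power_strict_increasing_iff by auto
    qed
    hence "card {i\<in>{1..2*n}. p^i \<le> 2*n} \<le> v - 1" using card_mono[of "{1..<v}"] by fastforce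
    moreover have "v \<ge> 1" using big n by (cases v) auto
    ultimately show False using vle by linarith
  qed
qed

definition pic :: "nat \<Rightarrow> nat" where "pic x = card {p. prime p \<and> p \<le> x}"

lemma binom_le_pow:
  fixes n :: nat assumes n: "n \<ge> 1"
  shows "(2*n) choose n \<le> (2*n) ^ pic (2*n)"
proof -
  let ?C = "(2*n) choose n"
  have C0: "?C > 0" by simp
  have sub: "prime_factors ?C \<subseteq> {p. prime p \<and> p \<le> 2*n}"
  proof
    fix p assume "p \<in> prime_factors ?C"
    hence pp: "prime p" "p dvd ?C" by (auto simp: in_prime_factors_iff)
    have "fact n * fact n * ?C = (fact (2*n) :: nat)" using binomial_fact_lemma[of n "2*n"] by simp
    hence "?C dvd fact (2*n)" by (metis dvd_triv_right)
    hence "p dvd fact (2*n)" using pp dvd_trans by blast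
    thus "p \<in> {p. prime p \<and> p \<le> 2*n}" using pp prime_dvd_fact_iff by auto
  qed
  have fin: "finite {p. prime p \<and> p \<le> 2*n}" by simp
  have "?C = (\<Prod>p\<in>prime_factors ?C. p ^ multiplicity p ?C)"
    using prime_factorization_nat[OF C0] .
  also have "\<dots> \<le> (\<Prod>p\<in>prime_factors ?C. 2*n)"
    by (rule prod_mono) (use binom_mult_bound n in \<open>auto simp: in_prime_factors_iff\<close>)
  also have "\<dots> = (2*n) ^ card (prime_factors ?C)" by simp
  also have "\<dots> \<le> (2*n) ^ pic (2*n)" unfolding pic_def
    by (rule power_increasing) (use n card_mono[OF fin sub] in auto)
  finally show ?thesis .
qed



lemma enum_ge: "enumerate {p::nat. prime p} i \<ge> i + 2"
proof (induction i)
  case 0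
  have "enumerate {p::nat. prime p} 0 \<in> {p. prime p}" using enumerate_in_set primes_infinite by blast
  hence "prime (enumerate {p::nat. prime p} 0)" by simp
  from prime_ge_2_nat[OF this] show ?case by simp
next
  case (Suc i)
  then show ?case using enumerate_step[OF primes_infinite, of i] by simp
qed

lemma nth_prime_ge: "y \<ge> 1 \<Longrightarrow> nth_prime y \<ge> y + 1"
  unfolding nth_prime_def using enum_ge[of "y-1"] by simp

lemma nth_prime_le:
  assumes y: "y \<ge> 1" and c: "pic x \<ge> y"
  shows "nth_prime y \<le> x"
proof (rule ccontr)
  let ?S = "{p::nat. prime p}"
  assume "\<not> nth_prime y \<le> x"
  hence big: "enumerate ?S (y-1) > x" unfolding nth_prime_def by simp
  have "{p. prime p \<and> p \<le> x} \<subseteq> enumerate ?S ` {..<y-1}"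
  proof
    fix p assume "p \<in> {p. prime p \<and> p \<le> x}"
    hence pp: "p \<in> ?S" "p \<le> x" by auto
    obtain i where i: "enumerate ?S i = p" using enumerate_Ex[OF primes_infinite pp(1)] by blast
    have "i < y - 1"
    proof (rule ccontr)
      assume "\<not> i < y - 1"
      hence "enumerate ?S (y-1) \<le> enumerate ?S i" using enumerate_mono_le_iff[OF primes_infinite] by simp
      thus False using i pp big by simp
    qed
    thus "p \<in> enumerate ?S ` {..<y-1}" using i by auto
  qed
  hence "pic x \<le> card (enumerate ?S ` {..<y-1})" unfolding pic_def by (rule card_mono[rotated]) simp
  also have "\<dots> \<le> y - 1" using card_image_le[of "{..<y-1}" "enumerate ?S"] by simp
  finally show False using c y by linarith
qed

lemma pic_lower:
  fixes n :: nat assumes n: "n \<ge> 1"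
  shows "real n * ln 4 - ln (2*n) \<le> real (pic (2*n)) * ln (2*n)"
proof -
  have "4^n / (2*real n) \<le> real ((2*n) choose n)" using central_binomial_lower_bound n by simp
  also have "\<dots> \<le> real ((2*n) ^ pic (2*n))" using binom_le_pow[OF n] by linarith
  finally have le: "4^n / (2*real n) \<le> (2*real n) ^ pic (2*n)" by simp
  have pos: "4^n / (2*real n) > 0" using n by simp
  have "ln (4^n / (2*real n)) \<le> ln ((2*real n) ^ pic (2*n))"
    using le pos by simp
  moreover have "ln (4^n / (2*real n)) = real n * ln 4 - ln (2*real n)"
    using n by (simp add: ln_div ln_realpow)
  moreover have "ln ((2*real n) ^ pic (2*n)) = real (pic (2*n)) * ln (2*real n)"
    using n by (intro ln_realpow)
  ultimately show ?thesis by simp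
qed



lemma E1: "eventually (\<lambda>x::real. (x+1) * ln(8*x*(ln x+1)) \<le> 4 * x * ln x) at_top"
  by real_asymp
lemma E2: "eventually (\<lambda>x::real. ln(8*x*(ln x+1)) \<le> ln x + 11/10 * ln (ln x)) at_top"
  by real_asymp

lemma ln4_ge1: "ln (4::real) \<ge> 1"
proof -
  have "ln (4::real) = 2 * ln 2" using ln_realpow[of 2 2] by simp
  thus ?thesis using ln2_ge_two_thirds by linarith
qed

lemma lemmaA: "\<exists>Y\<ge>3. \<forall>y\<ge>Y. ln (real (nth_prime y)) \<le> ln (real y) + 11/10 * ln (ln (real y))"
proof -
  have ev: "eventually (\<lambda>x::real. (x+1) * ln(8*x*(ln x+1)) \<le> 4 * x * ln x \<and>
      ln(8*x*(ln x+1)) \<le> ln x + 11/10 * ln (ln x) \<and> x \<ge> 3) at_top"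
    using E1 E2 eventually_ge_at_top[of "3::real"] by eventually_elim auto
  have "eventually (\<lambda>y::nat. (real y+1) * ln(8*real y*(ln (real y)+1)) \<le> 4 * real y * ln (real y) \<and>
      ln(8*real y*(ln (real y)+1)) \<le> ln (real y) + 11/10 * ln (ln (real y)) \<and> real y \<ge> 3) sequentially"
    using ev filterlim_real_sequentially by (rule eventually_compose_filterlim)
  then obtain N where N: "\<And>y. y \<ge> N \<Longrightarrow> (real y+1) * ln(8*real y*(ln (real y)+1)) \<le> 4 * real y * ln (real y) \<and>
      ln(8*real y*(ln (real y)+1)) \<le> ln (real y) + 11/10 * ln (ln (real y)) \<and> real y \<ge> 3"
    unfolding eventually_sequentially by blast
  show ?thesis
  proof (intro exI[of _ "max N 3"] conjI allI impI)
    show "3 \<le> max N 3" by simp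
  next
    fix y assume "max N 3 \<le> y"
    hence yN: "y \<ge> N" and y3: "y \<ge> 3" by auto
    note Ny = N[OF yN]
    define t where "t = nat \<lceil>ln (real y)\<rceil>"
    have lny: "ln (real y) > 1"
    proof -
      have "ln (real y) \<ge> ln 3" using y3 by simp
      moreover have "ln (3::real) > ln (272/100)" by simp
      ultimately show ?thesis using ln_272_gt_1 by linarith
    qed
    have t1: "real t \<ge> ln (real y)" "real t \<le> ln (real y) + 1" unfolding t_def using lny by linarith+
    have tpos: "t \<ge> 1" using t1 lny by linarith
    define m where "m = 4 * y * t"
    have m1: "m \<ge> 1" unfolding m_def using tpos y3 by simp
    have pl: "real m * ln 4 - ln (2*m) \<le> real (pic (2*m)) * ln (2*m)" using pic_lower[OF m1] .
    have twom: "real (2*m) \<le> 8*real y*(ln (real y)+1)"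
      unfolding m_def using t1 y3 by simp
    have lnm_pos: "ln (real (2*m)) > 0" using m1 by simp
    have lnm: "ln (real (2*m)) \<le> ln (8*real y*(ln (real y)+1))"
      using twom m1 by (subst ln_le_cancel_iff) auto
    have mge: "real m * ln 4 \<ge> 4 * real y * ln (real y)"
    proof -
      have "real m * ln 4 \<ge> real m" using ln4_ge1 m1 by simp
      moreover have "real m \<ge> 4 * real y * ln (real y)" unfolding m_def using t1 y3 by simp
      ultimately show ?thesis by linarith
    qed
    have "pic (2*m) \<ge> y"
    proof (rule ccontr)
      assume "\<not> y \<le> pic (2*m)"
      hence "real (pic (2*m)) \<le> real y - 1" by simp
      hence "real (pic (2*m)) * ln (2*m) \<le> (real y - 1) * ln (2*m)"
        using lnm_pos by (intro mult_right_mono) auto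
      hence "real m * ln 4 \<le> real y * ln (real (2*m))" using pl by (simp add: algebra_simps)
      also have "\<dots> < (real y + 1) * ln (real (2*m))" using lnm_pos by (simp add: algebra_simps)
      also have "\<dots> \<le> (real y + 1) * ln (8*real y*(ln (real y)+1))"
        using lnm by (intro mult_left_mono) auto
      also have "\<dots> \<le> 4 * real y * ln (real y)" using Ny by blast
      finally show False using mge by linarith
    qed
    hence "nth_prime y \<le> 2*m" using nth_prime_le y3 by simp
    hence "real (nth_prime y) \<le> 8*real y*(ln (real y)+1)" using twom by linarith
    moreover have "real (nth_prime y) > 0" using nth_prime_ge[of y] y3 by simp
    ultimately have "ln (real (nth_prime y)) \<le> ln (8*real y*(ln (real y)+1))" by simp
    thus "ln (real (nth_prime y)) \<le> ln (real y) + 11/10 * ln (ln (real y))" using Ny by linarith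
  qed
qed



lemma keyK:
  fixes L :: real and i :: nat
  assumes L: "L > 0" and u: "ln L \<ge> 5"
  shows "11/10 * ln (L + real (i+1) * ln (real (i+1)) * ln L)
     \<le> (real (i+2) * ln (real (i+2)) - real (i+1) * ln (real (i+1))) * ln L"
proof (cases "i = 0")
  case True
  have "ln (4::real) = 2 * ln 2" using ln_realpow[of 2 2] by simp
  then show ?thesis using True ln2_ge_two_thirds u by simp
next
  case False
  define s where "s = real (i+1)"
  define w where "w = ln L"
  have s2: "s \<ge> 2" unfolding s_def using False by simp
  have si: "real (i+2) = s + 1" unfolding s_def by simp
  have lns0: "ln s \<ge> 0" using s2 by simp
  have lns: "ln s \<le> s - 1" using s2 by (intro ln_le_minus_one) simp
  have wL: "w \<le> L" unfolding w_def using ln_le_minus_one[OF L] by simp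
  have A1: "L + s * ln s * w \<le> L * (s^2)"
  proof -
    have "s * ln s * w \<le> s * ln s * L" using wL lns0 s2 by (intro mult_left_mono) auto
    also have "\<dots> \<le> L * (s^2 - 1)"
    proof -
      have "s * ln s \<le> s * (s - 1)" using lns s2 by (intro mult_left_mono) auto
      hence "s * ln s \<le> s^2 - 1" using s2 by (simp add: algebra_simps power2_eq_square)
      thus ?thesis using L by (simp add: mult.commute mult_left_mono)
    qed
    finally show ?thesis by (simp add: algebra_simps)
  qed
  have pos: "L + s * ln s * w > 0"
  proof -
    have "s * ln s * w \<ge> 0" using lns0 s2 u unfolding w_def by simp
    thus ?thesis using L by linarith
  qed
  have A2: "ln (L + s * ln s * w) \<le> w + 2 * ln s"
  proof -
    have "ln (L + s * ln s * w) \<le> ln (L * (s^2))" using A1 pos by simp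
    also have "\<dots> = w + 2 * ln s" unfolding w_def using L s2 by (simp add: ln_mult ln_realpow)
    finally show ?thesis .
  qed
  have A3: "ln (s+1) - ln s \<ge> 1/(s+1)"
  proof -
    have "ln (s/(s+1)) \<le> s/(s+1) - 1" using s2 by (intro ln_le_minus_one) simp
    moreover have "ln (s/(s+1)) = ln s - ln (s+1)" using s2 by (simp add: ln_div)
    moreover have "s/(s+1) - 1 = - 1/(s+1)" using s2 by (simp add: field_simps)
    ultimately show ?thesis by simp
  qed
  have A4: "(s+1) * ln (s+1) - s * ln s \<ge> ln (s+1) + 2/3"
  proof -
    have "(s+1) * ln (s+1) - s * ln s = ln (s+1) + s * (ln (s+1) - ln s)" by (simp add: algebra_simps)
    moreover have "s * (ln (s+1) - ln s) \<ge> s * (1/(s+1))" using A3 s2 by (intro mult_left_mono) auto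
    moreover have "s * (1/(s+1)) \<ge> 2/3" using s2 by (simp add: field_simps)
    ultimately show ?thesis by linarith
  qed
  define v where "v = ln (s+1)"
  have v1: "v \<ge> 1"
  proof -
    have "ln (s+1) \<ge> ln 3" using s2 by simp
    moreover have "ln (3::real) > ln (272/100)" by simp
    ultimately show ?thesis unfolding v_def using ln_272_gt_1 by linarith
  qed
  have lnsv: "ln s \<le> v" unfolding v_def using s2 by simp
  have w5: "w \<ge> 5" using u unfolding w_def .
  have "(v - 44/100) * 5 \<le> (v - 44/100) * w" using v1 w5 by (intro mult_left_mono) auto
  hence key: "11/10 * w + 22/10 * v \<le> (v + 2/3) * w" using v1 w5 by (simp add: algebra_simps)
  have "11/10 * ln (L + s * ln s * w) \<le> 11/10 * (w + 2 * ln s)" using A2 by simp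
  also have "\<dots> \<le> 11/10 * w + 22/10 * v" using lnsv by simp
  also have "\<dots> \<le> (v + 2/3) * w" by (rule key)
  also have "\<dots> \<le> ((s+1) * ln (s+1) - s * ln s) * w" using A4 w5 unfolding v_def by (intro mult_right_mono) auto
  finally show ?thesis unfolding si s_def[symmetric] w_def by simp
qed



lemma iter_ge: "n \<ge> 1 \<Longrightarrow> iter_prime k n \<ge> n + k"
proof (induction k)
  case 0 then show ?case by simp
next
  case (Suc k)
  then have "iter_prime k n \<ge> 1" by simp
  from nth_prime_ge[OF this] Suc show ?case by simp
qed

lemma iter_mono: "n \<ge> 1 \<Longrightarrow> iter_prime k n \<le> iter_prime (k+i) n"
proof (induction i)
  case 0 then show ?case by simp
next
  case (Suc i)
  have "iter_prime (k+i) n \<ge> 1" using iter_ge[OF Suc.prems, of "k+i"] Suc.prems by linarith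
  from nth_prime_ge[OF this] Suc show ?case by simp
qed

theorem theorem9:
  fixes n :: nat
  assumes "n \<ge> 1"
  shows "\<exists>k0::nat. \<forall>k j::nat. k0 \<le> k \<and> k \<le> j \<longrightarrow>
           real (iter_prime j n) \<le> real (iter_prime k n) *
             ln (real (iter_prime k n)) powr
               (real (j - k + 1) * ln (real (j - k + 1)))"
proof -
  obtain Y where Y3: "Y \<ge> 3" and HY: "\<And>y. y \<ge> Y \<Longrightarrow>
      ln (real (nth_prime y)) \<le> ln (real y) + 11/10 * ln (ln (real y))"
    using lemmaA by blast
  define T where "T = max Y (nat \<lceil>exp (exp (5::real))\<rceil>)"
  show ?thesis
  proof (intro exI[of _ T] allI impI, elim conjE)
    fix k j :: nat
    assume kT: "T \<le> k" and kj: "k \<le> j"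
    define X where "X = real (iter_prime k n)"
    have Xk: "iter_prime k n \<ge> k" using iter_ge[OF assms, of k] by simp
    have XT: "iter_prime k n \<ge> T" using Xk kT by simp
    have Xbig: "X \<ge> exp (exp 5)"
    proof -
      have "real (nat \<lceil>exp (exp (5::real))\<rceil>) \<ge> exp (exp 5)" by linarith
      hence "real T \<ge> exp (exp 5)" unfolding T_def by linarith
      thus ?thesis unfolding X_def using XT by linarith
    qed
    have Xpos: "X > 0" using Xbig by (smt (verit) exp_gt_zero)
    define L where "L = ln X"
    have L5: "L \<ge> exp 5" unfolding L_def using Xbig Xpos
      by (metis exp_gt_zero ln_exp ln_le_cancel_iff)
    have Lpos: "L > 0" using L5 by (smt (verit) exp_gt_zero)
    have u5: "ln L \<ge> 5" using L5 Lpos by (metis exp_gt_zero ln_exp ln_le_cancel_iff)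
    have claim: "ln (real (iter_prime (k+i) n)) \<le> L + real (i+1) * ln (real (i+1)) * ln L" for i
    proof (induction i)
      case 0 then show ?case unfolding L_def X_def by simp
    next
      case (Suc i)
      define z where "z = iter_prime (k+i) n"
      define B where "B = L + real (i+1) * ln (real (i+1)) * ln L"
      have zX: "z \<ge> iter_prime k n" unfolding z_def using iter_mono[OF assms] by simp
      have zY: "z \<ge> Y" using zX XT unfolding T_def by simp
      have zpos: "real z > 0" using zY Y3 by simp
      have lnzL: "ln (real z) \<ge> L" unfolding L_def using zX Xpos by (subst ln_le_cancel_iff) (auto simp: X_def)
      have lnzB: "ln (real z) \<le> B" using Suc unfolding z_def B_def .
      have lnlnz: "ln (ln (real z)) \<le> ln B" using lnzL lnzB Lpos by simp
      have "ln (real (iter_prime (k + Suc i) n)) = ln (real (nth_prime z))" unfolding z_def by simp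
      also have "\<dots> \<le> ln (real z) + 11/10 * ln (ln (real z))" using HY[OF zY] .
      also have "\<dots> \<le> B + 11/10 * ln B" using lnzB lnlnz by simp
      also have "\<dots> \<le> B + (real (i+2) * ln (real (i+2)) - real (i+1) * ln (real (i+1))) * ln L"
        using keyK[OF Lpos u5, of i] unfolding B_def by simp
      also have "\<dots> = L + real (Suc i + 1) * ln (real (Suc i + 1)) * ln L"
        unfolding B_def by (simp add: algebra_simps)
      finally show ?case .
    qed
    define i where "i = j - k"
    have ji: "j = k + i" and i1: "j - k + 1 = i + 1" unfolding i_def using kj by simp_all
    have zpos: "real (iter_prime j n) > 0" using iter_ge[OF assms, of j] assms by simp
    have "real (iter_prime j n) = exp (ln (real (iter_prime j n)))" using zpos by simp
    also have "\<dots> \<le> exp (L + real (i+1) * ln (real (i+1)) * ln L)"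
      using claim[of i] ji by simp
    also have "\<dots> = X * L powr (real (i+1) * ln (real (i+1)))"
      using Xpos Lpos unfolding L_def by (simp add: exp_add powr_def mult.commute)
    finally show "real (iter_prime j n) \<le> real (iter_prime k n) *
             ln (real (iter_prime k n)) powr
               (real (j - k + 1) * ln (real (j - k + 1)))"
      unfolding i1 X_def[symmetric] L_def[symmetric] .
  qed
qed

end
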